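(* Let $\mathbb{F}$ be a field of characteristic $2$ with algebraic closure $\overline{\mathbb{F}}$, let $V$ be an $n$-dimensional $\mathbb{F}$-vector space and $b$ a non-degenerate symmetric bilinear form on $V$ with quadratic form $Q: x\mapsto b(x,x)$. Let $V_1, V_2$ be linear subspaces of $V$ such that $b_a(v_1,v_2)=0$ for all $v_1\in V_1$, $v_2\in V_2$, and assume $\dim V_1 + \dim V_2 > n$. Then: (1) $n$ is odd and the Witt index of $b$ equals $\frac{n-1}{2}$; (2) both $V_1$ and $V_2$ contain $(\operatorname{Ker} Q)^\perp$; (3) $\dim V_1 + \dim V_2 = n+1$.
   Context: Every $\alpha\in\overline{\mathbb{F}}$ has a unique square root $\sqrt{\alpha}\in\overline{\mathbb{F}}$. The a-transform of $b$ is the map $b_a : V^2 \to \overline{\mathbb{F}}$, $b_a(x,y) := b(x,y) + \sqrt{Q(x)Q(y)}$. $\operatorname{Ker} Q = \{x\in V: Q(x)=0\}$ (a linear subspace in characteristic $2$), and $X^\perp = \{y\in V : b(x,y)=0\ \forall x\in X\}$. The Witt index of $b$ is the greatest dimension of a subspace on which $b$ vanishes identically. *)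

theory Defs
  imports "HOL-Analysis.Analysis" "HOL-Algebra.Algebraic_Closure_Type"
begin

text \<open>V is modelled as the coordinate space 'a^'n (n = CARD('n)) over the field 'a;
  the algebraic closure of 'a is the library type 'a alg_closure with embedding to_ac.\<close>

definition sym_bilinear :: "('a::field ^ 'n \<Rightarrow> 'a ^ 'n \<Rightarrow> 'a) \<Rightarrow> bool" where
  "sym_bilinear b \<longleftrightarrow>
     (\<forall>x y z. b (x + y) z = b x z + b y z) \<and>
     (\<forall>c x z. b (c *s x) z = c * b x z) \<and>
     (\<forall>x y. b x y = b y x)"

definition nondegenerate :: "('a::field ^ 'n \<Rightarrow> 'a ^ 'n \<Rightarrow> 'a) \<Rightarrow> bool" where
  "nondegenerate b \<longleftrightarrow> (\<forall>x. (\<forall>y. b x y = 0) \<longrightarrow> x = 0)"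

definition quad :: "('a::field ^ 'n \<Rightarrow> 'a ^ 'n \<Rightarrow> 'a) \<Rightarrow> 'a ^ 'n \<Rightarrow> 'a" where
  "quad b x = b x x"

text \<open>The unique square root in the algebraic closure (characteristic 2).\<close>
definition ac_sqrt :: "'a::field alg_closure \<Rightarrow> 'a alg_closure" where
  "ac_sqrt \<alpha> = (THE \<beta>. \<beta> ^ 2 = \<alpha>)"

definition a_transform :: "('a::field ^ 'n \<Rightarrow> 'a ^ 'n \<Rightarrow> 'a) \<Rightarrow> 'a ^ 'n \<Rightarrow> 'a ^ 'n \<Rightarrow> 'a alg_closure" where
  "a_transform b x y = to_ac (b x y) + ac_sqrt (to_ac (quad b x * quad b y))"

definition kerQ :: "('a::field ^ 'n \<Rightarrow> 'a ^ 'n \<Rightarrow> 'a) \<Rightarrow> ('a ^ 'n) set" where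
  "kerQ b = {x. quad b x = 0}"

definition orth_compl :: "('a::field ^ 'n \<Rightarrow> 'a ^ 'n \<Rightarrow> 'a) \<Rightarrow> ('a ^ 'n) set \<Rightarrow> ('a ^ 'n) set" where
  "orth_compl b S = {y. \<forall>x\<in>S. b x y = 0}"

definition witt_index :: "('a::field ^ 'n \<Rightarrow> 'a ^ 'n \<Rightarrow> 'a) \<Rightarrow> nat" where
  "witt_index b = Max {vec.dim W | W. vec.subspace W \<and> (\<forall>x\<in>W. \<forall>y\<in>W. b x y = 0)}"

end

theory Submission
  imports Defs
begin

definition linon :: "('a::field^'n) set \<Rightarrow> ('a^'n \<Rightarrow> 'a) \<Rightarrow> bool" where
 "linon U f \<longleftrightarrow> (\<forall>x\<in>U. \<forall>y\<in>U. f (x+y) = f x + f y) \<and> (\<forall>c. \<forall>x\<in>U. f (c *s x) = c * f x)"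

lemma linon_0: "vec.subspace U \<Longrightarrow> linon U f \<Longrightarrow> f 0 = 0"
  unfolding linon_def by (metis vec.subspace_0 vector_smult_lzero mult_zero_left)

lemma kernel_step:
  assumes S: "vec.subspace S" and f: "linon S f"
  shows "vec.subspace {x\<in>S. f x = 0} \<and> vec.dim S \<le> vec.dim {x\<in>S. f x = 0} + 1"
proof -
  let ?S' = "{x\<in>S. f x = 0}"
  have sub: "vec.subspace ?S'"
  proof (rule vec.subspaceI)
    show "0 \<in> ?S'" using S linon_0[OF S f] vec.subspace_0 by blast
  next
    fix x y assume "x \<in> ?S'" "y \<in> ?S'"
    then show "x + y \<in> ?S'" using S f unfolding linon_def by (simp add: vec.subspace_add)
  next
    fix c x assume "x \<in> ?S'"
    then show "c *s x \<in> ?S'" using S f unfolding linon_def by (simp add: vec.subspace_scale)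
  qed
  have "vec.dim S \<le> vec.dim ?S' + 1"
  proof (cases "\<forall>x\<in>S. f x = 0")
    case True then have "?S' = S" by auto
    then show ?thesis by simp
  next
    case False
    then obtain s0 where s0: "s0 \<in> S" "f s0 \<noteq> 0" by auto
    have "S \<subseteq> vec.span (insert s0 ?S')"
    proof
      fix x assume x: "x \<in> S"
      let ?k = "f x / f s0"
      have m: "x - ?k *s s0 = x + (- ?k) *s s0" by (simp add: vector_smult_lneg)
      have in1: "(- ?k) *s s0 \<in> S" using S s0 vec.subspace_scale by blast
      have e1: "f (x + (-?k) *s s0) = f x + f ((-?k) *s s0)" using f x in1 unfolding linon_def by blast
      have e2: "f ((-?k) *s s0) = (-?k) * f s0" using f s0 unfolding linon_def by blast
      have "f (x - ?k *s s0) = f x + (- ?k) * f s0"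
        unfolding m e1 e2 ..
      also have "\<dots> = 0" using s0 by simp
      finally have fz: "f (x - ?k *s s0) = 0" .
      have "x - ?k *s s0 \<in> S" using S x in1 unfolding m by (rule vec.subspace_add)
      with fz have "x - ?k *s s0 \<in> ?S'" by blast
      then have "x - ?k *s s0 \<in> vec.span ?S'" by (rule vec.span_base)
      then show "x \<in> vec.span (insert s0 ?S')"
        unfolding vec.span_insert by (intro CollectI exI)
    qed
    then have "vec.dim S \<le> vec.dim (insert s0 ?S')" by (rule vec.dim_mono)
    also have "\<dots> \<le> vec.dim ?S' + 1" by (simp add: vec.dim_insert)
    finally show ?thesis .
  qed
  with sub show ?thesis by blast
qed

lemma lower:
  assumes U: "vec.subspace U" and fin: "finite F" and lin: "\<forall>f\<in>F. linon U f"
  shows "vec.subspace {x\<in>U. \<forall>f\<in>F. f x = 0} \<and> vec.dim U \<le> vec.dim {x\<in>U. \<forall>f\<in>F. f x = 0} + card F"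
  using fin lin
proof (induction F rule: finite_induct)
  case empty
  then show ?case using U by simp
next
  case (insert f F)
  let ?S = "{x\<in>U. \<forall>f\<in>F. f x = 0}"
  have IH: "vec.subspace ?S" "vec.dim U \<le> vec.dim ?S + card F" using insert by auto
  have "linon ?S f" using insert.prems unfolding linon_def by auto
  from kernel_step[OF IH(1) this]
  have k: "vec.subspace {x\<in>?S. f x = 0}" "vec.dim ?S \<le> vec.dim {x\<in>?S. f x = 0} + 1" by auto
  have eq: "{x\<in>?S. f x = 0} = {x\<in>U. \<forall>g\<in>insert f F. g x = 0}" by auto
  show ?case using k IH insert.hyps unfolding eq by simp
qed

lemma vanish_span:
  assumes U: "vec.subspace U" and g: "linon U g" and SX: "S \<subseteq> U" and z: "\<forall>s\<in>S. g s = 0"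
    and y: "y \<in> vec.span S"
  shows "g y = 0"
proof -
  have "vec.subspace {x\<in>U. g x = 0}" using kernel_step[OF U g] by blast
  moreover have "S \<subseteq> {x\<in>U. g x = 0}" using SX z by auto
  ultimately have "vec.span S \<subseteq> {x\<in>U. g x = 0}" by (rule vec.span_minimal[rotated])
  then show ?thesis using y by auto
qed

lemma ext_basis:
  assumes R: "vec.subspace R" and W: "vec.subspace W" and RY: "R \<subseteq> W"
  obtains B where "finite B" "B \<subseteq> W" "card B + vec.dim R = vec.dim W" "W \<subseteq> vec.span (R \<union> B)"
proof -
  obtain BR where BR: "finite BR" "BR \<subseteq> R" "vec.independent BR" "vec.span BR = R" "card BR = vec.dim R"
    using vec.basis_subspace_exists[OF R] by blast
  obtain B where B: "BR \<subseteq> B" "B \<subseteq> W" "vec.independent B" "W \<subseteq> vec.span B"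
    using vec.maximal_independent_subset_extend[of BR W] BR RY by blast
  have fB: "finite B" using B(3) vec.finiteI_independent by blast
  have cB: "card B = vec.dim W" using vec.basis_card_eq_dim[OF B(2) B(4) B(3)] .
  have c: "card (B - BR) + vec.dim R = vec.dim W"
    using card_Diff_subset[OF BR(1) B(1)] card_mono[OF fB B(1)] cB BR(5) by simp
  have "vec.span B \<subseteq> vec.span (R \<union> (B - BR))"
    by (rule vec.span_mono) (use B(1) BR(2) in auto)
  then show ?thesis using that[of "B - BR"] fB B c by blast
qed


lemma linon_mono: "linon U f \<Longrightarrow> W \<subseteq> U \<Longrightarrow> linon W f"
  unfolding linon_def by blast

lemma perp_subspace:
  assumes U: "vec.subspace U" and lin: "\<forall>y\<in>T. linon U (A y)"
  shows "vec.subspace {x\<in>U. \<forall>y\<in>T. A y x = 0}"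
proof (rule vec.subspaceI)
  show "0 \<in> {x\<in>U. \<forall>y\<in>T. A y x = 0}" using U lin linon_0[OF U] vec.subspace_0 by blast
next
  fix x z assume "x \<in> {x\<in>U. \<forall>y\<in>T. A y x = 0}" "z \<in> {x\<in>U. \<forall>y\<in>T. A y x = 0}"
  then show "x + z \<in> {x\<in>U. \<forall>y\<in>T. A y x = 0}" using U lin unfolding linon_def by (simp add: vec.subspace_add)
next
  fix c x assume "x \<in> {x\<in>U. \<forall>y\<in>T. A y x = 0}"
  then show "c *s x \<in> {x\<in>U. \<forall>y\<in>T. A y x = 0}" using U lin unfolding linon_def by (simp add: vec.subspace_scale)
qed

definition bilon :: "('a::field^'n) set \<Rightarrow> ('a^'n \<Rightarrow> 'a^'n \<Rightarrow> 'a) \<Rightarrow> bool" where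
  "bilon U A \<longleftrightarrow> (\<forall>x\<in>U. linon U (A x)) \<and> (\<forall>y\<in>U. linon U (\<lambda>x. A x y)) \<and> (\<forall>x\<in>U. \<forall>y\<in>U. A x y = A y x)"

lemma dimf:
  assumes U: "vec.subspace U" and W: "vec.subspace W" and WU: "W \<subseteq> U" and A: "bilon U A"
  shows "vec.dim {x\<in>U. \<forall>y\<in>W. A y x = 0} + vec.dim W = vec.dim U + vec.dim {y\<in>W. \<forall>x\<in>U. A x y = 0}"
proof -
  let ?Z = "{x\<in>U. \<forall>y\<in>W. A y x = 0}"
  let ?R = "{y\<in>W. \<forall>x\<in>U. A x y = 0}"
  have l1: "\<forall>x\<in>U. linon U (A x)" and l2: "\<forall>y\<in>U. linon U (\<lambda>x. A x y)"
    and sy: "\<forall>x\<in>U. \<forall>y\<in>U. A x y = A y x" using A unfolding bilon_def by auto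
  have Zs: "vec.subspace ?Z" using perp_subspace[OF U, of W A] l1 WU by blast
  have Rs: "vec.subspace ?R" using perp_subspace[OF W, of U A] l1 linon_mono[OF _ WU] by blast
  have RW: "?R \<subseteq> W" by blast
  have ZU: "?Z \<subseteq> U" by blast
  obtain B where B: "finite B" "B \<subseteq> W" "card B + vec.dim ?R = vec.dim W" "W \<subseteq> vec.span (?R \<union> B)"
    using ext_basis[OF Rs W RW] by blast
  let ?F = "A ` B"
  have lo1: "vec.dim U \<le> vec.dim {x\<in>U. \<forall>f\<in>?F. f x = 0} + card ?F"
    using lower[OF U, of ?F] B(1,2) WU l1 by blast
  have sub1: "{x\<in>U. \<forall>f\<in>?F. f x = 0} \<subseteq> ?Z"
  proof
    fix x assume x: "x \<in> {x\<in>U. \<forall>f\<in>?F. f x = 0}"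
    have "A y x = 0" if y: "y \<in> W" for y
    proof (rule vanish_span[OF U, of "\<lambda>y. A y x" "?R \<union> B"])
      show "linon U (\<lambda>y. A y x)" using l2 x by blast
      show "?R \<union> B \<subseteq> U" using B(2) WU by blast
      show "\<forall>s\<in>?R \<union> B. A s x = 0"
      proof
        fix s assume s: "s \<in> ?R \<union> B"
        show "A s x = 0"
        proof (cases "s \<in> B")
          case True then show ?thesis using x by blast
        next
          case False then have "s \<in> ?R" using s by blast
          then have "A x s = 0" "s \<in> U" using x WU by blast+
          then show ?thesis using sy x by auto
        qed
      qed
      show "y \<in> vec.span (?R \<union> B)" using B(4) y by blast
    qed
    then show "x \<in> ?Z" using x by blast
  qed
  have "card ?F \<le> card B" using B(1) by (rule card_image_le)
  then have p1: "vec.dim U + vec.dim ?R \<le> vec.dim ?Z + vec.dim W"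
    using lo1 vec.dim_subset[OF sub1] B(3) by linarith
  obtain C where C: "finite C" "C \<subseteq> U" "card C + vec.dim ?Z = vec.dim U" "U \<subseteq> vec.span (?Z \<union> C)"
    using ext_basis[OF Zs U ZU] by blast
  let ?G = "A ` C"
  have lo2: "vec.dim W \<le> vec.dim {y\<in>W. \<forall>f\<in>?G. f y = 0} + card ?G"
    using lower[OF W, of ?G] C(1,2) l1 linon_mono[OF _ WU] by blast
  have sub2: "{y\<in>W. \<forall>f\<in>?G. f y = 0} \<subseteq> ?R"
  proof
    fix y assume y: "y \<in> {y\<in>W. \<forall>f\<in>?G. f y = 0}"
    have "A x y = 0" if x: "x \<in> U" for x
    proof (rule vanish_span[OF U, of "\<lambda>x. A x y" "?Z \<union> C"])
      show "linon U (\<lambda>x. A x y)" using l2 y WU by blast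
      show "?Z \<union> C \<subseteq> U" using C(2) by blast
      show "\<forall>s\<in>?Z \<union> C. A s y = 0"
      proof
        fix s assume s: "s \<in> ?Z \<union> C"
        show "A s y = 0"
        proof (cases "s \<in> C")
          case True then show ?thesis using y by blast
        next
          case False then have "s \<in> ?Z" using s by blast
          then have "A y s = 0" "s \<in> U" "y \<in> U" using y WU by blast+
          then show ?thesis using sy by auto
        qed
      qed
      show "x \<in> vec.span (?Z \<union> C)" using C(4) x by blast
    qed
    then show "y \<in> ?R" using y by blast
  qed
  have "card ?G \<le> card C" using C(1) by (rule card_image_le)
  then have p2: "vec.dim W + vec.dim ?Z \<le> vec.dim ?R + vec.dim U"
    using lo2 vec.dim_subset[OF sub2] C(3) by linarith
  from p1 p2 show ?thesis by linarith
qed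

lemma two_ac: "CHAR('a::field) = 2 \<Longrightarrow> (2::'a alg_closure) = 0"
proof -
  assume h: "CHAR('a::field) = 2"
  have "of_nat CHAR('a alg_closure) = (0::'a alg_closure)" by (rule of_nat_CHAR)
  then show ?thesis using h by simp
qed

lemma two_a: "CHAR('a::field) = 2 \<Longrightarrow> (2::'a) = 0"
proof -
  assume h: "CHAR('a::field) = 2"
  have "of_nat CHAR('a) = (0::'a)" by (rule of_nat_CHAR)
  then show ?thesis using h by simp
qed

lemma neg_ac: "CHAR('a::field) = 2 \<Longrightarrow> - (w::'a alg_closure) = w"
proof -
  assume h: "CHAR('a::field) = 2"
  have "w + w = 2 * w" by simp
  also have "\<dots> = 0" using two_ac[OF h] by simp
  finally show ?thesis by (simp add: minus_unique)
qed

lemma sqrt_unique: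
  assumes h: "CHAR('a::field) = 2" and y: "(y::'a alg_closure)^2 = z"
  shows "ac_sqrt z = y"
  unfolding ac_sqrt_def
proof (rule the_equality)
  show "y^2 = z" by fact
  fix w assume w: "w^2 = z"
  have "(w + y)^2 = w^2 + y^2 + 2 * w * y" by (simp add: power2_eq_square algebra_simps)
  also have "\<dots> = 2 * z + 2 * w * y" using w y by simp
  also have "\<dots> = 0" using two_ac[OF h] by simp
  finally have "w + y = 0" by simp
  then have "w = - y" by (simp add: eq_neg_iff_add_eq_0)
  then show "w = y" using neg_ac[OF h] by simp
qed

lemma sqrt_sq:
  assumes h: "CHAR('a::field) = 2"
  shows "(ac_sqrt (z::'a alg_closure))^2 = z"
proof -
  obtain y where "y ^ 2 = z" using nth_root_exists[of 2 z] by auto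
  then show ?thesis by (simp add: sqrt_unique[OF h])
qed

lemma sb_add1: "sym_bilinear b \<Longrightarrow> b (x + y) z = b x z + b y z" unfolding sym_bilinear_def by blast
lemma sb_smult1: "sym_bilinear b \<Longrightarrow> b (c *s x) z = c * b x z" unfolding sym_bilinear_def by blast
lemma sb_sym: "sym_bilinear b \<Longrightarrow> b x y = b y x" unfolding sym_bilinear_def by blast
lemma sb_add2: "sym_bilinear b \<Longrightarrow> b z (x + y) = b z x + b z y"
  by (metis sb_add1 sb_sym)
lemma sb_smult2: "sym_bilinear b \<Longrightarrow> b z (c *s x) = c * b z x"
  by (metis sb_smult1 sb_sym)
lemma sb_zero1: "sym_bilinear b \<Longrightarrow> b 0 z = 0"
  by (metis sb_smult1 vector_smult_lzero mult_zero_left)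
lemma sb_zero2: "sym_bilinear b \<Longrightarrow> b z 0 = 0"
  by (metis sb_zero1 sb_sym)

lemma sb_bilon: assumes sb: "sym_bilinear b" shows "bilon U b"
proof -
  have "\<forall>x\<in>U. linon U (b x)" unfolding linon_def by (simp add: sb_add2[OF sb] sb_smult2[OF sb])
  moreover have "\<forall>y\<in>U. linon U (\<lambda>x. b x y)" unfolding linon_def by (simp add: sb_add1[OF sb] sb_smult1[OF sb])
  moreover have "\<forall>x\<in>U. \<forall>y\<in>U. b x y = b y x" using sb_sym[OF sb] by blast
  ultimately show ?thesis unfolding bilon_def by blast
qed

lemma quad_add: assumes h: "CHAR('a::field) = 2" and sb: "sym_bilinear (b::'a^'n \<Rightarrow> _)"
  shows "quad b (x + y) = quad b x + quad b y"
proof -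
  have "quad b (x + y) = quad b x + quad b y + 2 * b x y"
    unfolding quad_def using sb_add1[OF sb] sb_add2[OF sb] sb_sym[OF sb, of y x] by (simp add: algebra_simps)
  then show ?thesis using two_a[OF h] by simp
qed

lemma quad_smult: assumes sb: "sym_bilinear b"
  shows "quad b (c *s x) = c^2 * quad b x"
  unfolding quad_def using sb_smult1[OF sb] sb_smult2[OF sb] by (simp add: power2_eq_square)

definition qq :: "('a::field ^ 'n \<Rightarrow> 'a ^ 'n \<Rightarrow> 'a) \<Rightarrow> 'a ^ 'n \<Rightarrow> 'a alg_closure" where
  "qq b x = ac_sqrt (to_ac (quad b x))"

lemma qq_sq: "CHAR('a::field) = 2 \<Longrightarrow> (qq b x)^2 = to_ac (quad (b::'a^'n \<Rightarrow> _) x)"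
  unfolding qq_def by (rule sqrt_sq)

lemma qq_add: assumes h: "CHAR('a::field) = 2" and sb: "sym_bilinear (b::'a^'n \<Rightarrow> _)"
  shows "qq b (x + y) = qq b x + qq b y"
proof -
  have "(qq b x + qq b y)^2 = (qq b x)^2 + (qq b y)^2 + 2 * qq b x * qq b y"
    by (simp add: power2_eq_square algebra_simps)
  also have "\<dots> = to_ac (quad b (x + y))"
    by (simp add: qq_sq[OF h] two_ac[OF h] quad_add[OF h sb])
  finally show ?thesis unfolding qq_def[of b "x+y"] by (intro sqrt_unique[OF h])
qed

lemma qq_smult: assumes h: "CHAR('a::field) = 2" and sb: "sym_bilinear (b::'a^'n \<Rightarrow> _)"
  shows "qq b (c *s x) = to_ac c * qq b x"
proof -
  have "(to_ac c * qq b x)^2 = to_ac (c^2) * (qq b x)^2"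
    by (simp add: power_mult_distrib)
  also have "\<dots> = to_ac (quad b (c *s x))"
    by (simp add: qq_sq[OF h] quad_smult[OF sb])
  finally show ?thesis unfolding qq_def[of b "c *s x"] by (intro sqrt_unique[OF h])
qed

lemma qq_zero_iff: assumes h: "CHAR('a::field) = 2" shows "qq b x = 0 \<longleftrightarrow> quad (b::'a^'n \<Rightarrow> _) x = 0"
proof -
  have "qq b x = 0 \<longleftrightarrow> (qq b x)^2 = 0" by simp
  also have "\<dots> \<longleftrightarrow> to_ac (quad b x) = 0" by (simp only: qq_sq[OF h])
  finally show ?thesis by simp
qed

lemma at_eq: assumes h: "CHAR('a::field) = 2"
  shows "a_transform b x y = to_ac (b x y) + qq (b::'a^'n \<Rightarrow> _) x * qq b y"
proof -
  have "(qq b x * qq b y)^2 = to_ac (quad b x * quad b y)"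
    by (simp add: qq_sq[OF h] power_mult_distrib)
  then have "ac_sqrt (to_ac (quad b x * quad b y)) = qq b x * qq b y" by (rule sqrt_unique[OF h])
  then show ?thesis unfolding a_transform_def by simp
qed

lemma orth_full:
  assumes sb: "sym_bilinear (b::'a::field^'n \<Rightarrow> _)" and nd: "nondegenerate b" and W: "vec.subspace W"
  shows "vec.dim {x\<in>UNIV. \<forall>y\<in>W. b y x = 0} + vec.dim W = CARD('n)"
proof -
  have e: "vec.dim {x\<in>UNIV. \<forall>y\<in>W. b y x = 0} + vec.dim W = vec.dim (UNIV::('a^'n) set) + vec.dim {y\<in>W. \<forall>x\<in>UNIV. b x y = 0}"
    by (rule dimf[OF vec.subspace_UNIV W subset_UNIV sb_bilon[OF sb]])
  have "{y\<in>W. \<forall>x\<in>UNIV. b x y = 0} \<subseteq> {0}"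
  proof
    fix y assume "y \<in> {y\<in>W. \<forall>x\<in>UNIV. b x y = 0}"
    then have "\<forall>x. b y x = 0" using sb_sym[OF sb] by auto
    then show "y \<in> {0}" using nd unfolding nondegenerate_def by blast
  qed
  then have z: "vec.dim {y\<in>W. \<forall>x\<in>UNIV. b x y = 0} = 0" by simp
  have c: "vec.dim (UNIV::('a^'n) set) = CARD('n)" by (rule vec_dim_card)
  from e z c show ?thesis by linarith
qed

lemma iso_extend:
  assumes P: "vec.subspace P" and A: "bilon P A" and L: "vec.subspace L" and LP: "L \<subseteq> P"
    and iso: "\<forall>u\<in>L. \<forall>v\<in>L. A u v = 0" and x: "x \<in> P" and xL: "\<forall>y\<in>L. A y x = 0" and xx: "A x x = 0"
  shows "\<forall>u\<in>vec.span (insert x L). \<forall>v\<in>vec.span (insert x L). A u v = 0"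
proof (intro ballI)
  have l1: "\<forall>z\<in>P. linon P (A z)" and l2: "\<forall>y\<in>P. linon P (\<lambda>z. A z y)"
    and sy: "\<forall>u\<in>P. \<forall>v\<in>P. A u v = A v u" using A unfolding bilon_def by auto
  have dec: "\<exists>l k. l \<in> L \<and> u = l + k *s x" if uu: "u \<in> vec.span (insert x L)" for u
  proof -
    obtain k where "u - k *s x \<in> vec.span L" using uu unfolding vec.span_insert by blast
    then have "u - k *s x \<in> L" using L by (metis vec.span_eq_iff)
    then show ?thesis by (intro exI[of _ "u - k *s x"] exI[of _ k]) simp
  qed
  fix u v assume u: "u \<in> vec.span (insert x L)" and v: "v \<in> vec.span (insert x L)"
  obtain l k where lk: "l \<in> L" "u = l + k *s x" using dec[OF u] by blast
  obtain l' k' where lk': "l' \<in> L" "v = l' + k' *s x" using dec[OF v] by blast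
  have lP: "l \<in> P" "l' \<in> P" using lk lk' LP by auto
  have kx: "k *s x \<in> P" "k' *s x \<in> P" using x P vec.subspace_scale by blast+
  have vP: "v \<in> P" using lk'(2) lP(2) kx(2) P vec.subspace_add by metis
  have "A u v = A l v + A (k *s x) v"
    using l2 vP lP(1) kx(1) unfolding lk(2) linon_def by blast
  also have "A (k *s x) v = k * A x v" using l2 vP x unfolding linon_def by blast
  also have "A l v = A l l' + A l (k' *s x)" using l1 lP kx unfolding lk'(2) linon_def by blast
  also have "A l (k' *s x) = k' * A l x" using l1 lP x unfolding linon_def by blast
  also have "A x v = A x l' + A x (k' *s x)" using l1 lP kx x unfolding lk'(2) linon_def by blast
  also have "A x (k' *s x) = k' * A x x" using l1 x unfolding linon_def by blast
  also have "A x l' = A l' x" using sy x lP by blast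
  finally show "A u v = 0" using iso lk(1) lk'(1) xL xx by simp
qed

theorem lemma4p7:
  fixes b :: "'a::field ^ 'n \<Rightarrow> 'a ^ 'n \<Rightarrow> 'a"
    and V1 V2 :: "('a ^ 'n) set"
  assumes "CHAR('a) = 2"
    and "sym_bilinear b"
    and "nondegenerate b"
    and "vec.subspace V1" and "vec.subspace V2"
    and "\<forall>v1\<in>V1. \<forall>v2\<in>V2. a_transform b v1 v2 = 0"
    and "vec.dim V1 + vec.dim V2 > CARD('n)"
  shows "odd (CARD('n)) \<and> witt_index b = (CARD('n) - 1) div 2
    \<and> orth_compl b (kerQ b) \<subseteq> V1 \<and> orth_compl b (kerQ b) \<subseteq> V2
    \<and> vec.dim V1 + vec.dim V2 = CARD('n) + 1"
proof -
  note h = assms(1) and sb = assms(2) and nd = assms(3) and V1 = assms(4) and V2 = assms(5)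
    and hyp = assms(6) and dimh = assms(7)
  define q where "q = qq b"
  have qadd: "\<And>x y. q (x+y) = q x + q y" unfolding q_def by (rule qq_add[OF h sb])
  have qsm: "\<And>c x. q (c *s x) = to_ac c * q x" unfolding q_def by (rule qq_smult[OF h sb])
  have qsq: "\<And>x. (q x)^2 = to_ac (quad b x)" unfolding q_def by (rule qq_sq[OF h])
  have qz: "\<And>x. q x = 0 \<longleftrightarrow> quad b x = 0" unfolding q_def by (rule qq_zero_iff[OF h])
  have ate: "\<And>x y. a_transform b x y = to_ac (b x y) + q x * q y" unfolding q_def by (rule at_eq[OF h])
  have h6: "to_ac (b v1 v2) = q v1 * q v2" if "v1 \<in> V1" "v2 \<in> V2" for v1 v2
  proof -
    have "to_ac (b v1 v2) + q v1 * q v2 = 0" using hyp that ate by metis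
    then have "to_ac (b v1 v2) = - (q v1 * q v2)" by (simp add: eq_neg_iff_add_eq_0)
    then show ?thesis using neg_ac[OF h] by metis
  qed
  have bsym: "\<And>x y. b x y = b y x" by (rule sb_sym[OF sb])

  have "\<exists>u1\<in>V1. q u1 \<noteq> 0"
  proof (rule ccontr)
    assume "\<not> (\<exists>u1\<in>V1. q u1 \<noteq> 0)"
    then have "\<forall>v\<in>V1. q v = 0" by blast
    then have "V2 \<subseteq> {x\<in>UNIV. \<forall>y\<in>V1. b y x = 0}" using h6 by auto
    then have "vec.dim V2 \<le> vec.dim {x\<in>UNIV. \<forall>y\<in>V1. b y x = 0}" by (rule vec.dim_subset)
    with orth_full[OF sb nd V1] dimh show False by linarith
  qed
  then obtain u1 where u1: "u1 \<in> V1" "q u1 \<noteq> 0" by blast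
  have "\<exists>u2\<in>V2. q u2 \<noteq> 0"
  proof (rule ccontr)
    assume "\<not> (\<exists>u2\<in>V2. q u2 \<noteq> 0)"
    then have "\<forall>v\<in>V2. q v = 0" by blast
    then have "V1 \<subseteq> {x\<in>UNIV. \<forall>y\<in>V2. b y x = 0}" using h6 bsym by auto
    then have "vec.dim V1 \<le> vec.dim {x\<in>UNIV. \<forall>y\<in>V2. b y x = 0}" by (rule vec.dim_subset)
    with orth_full[OF sb nd V2] dimh show False by linarith
  qed
  then obtain u2 where u2: "u2 \<in> V2" "q u2 \<noteq> 0" by blast

  define \<alpha> where "\<alpha> = q u1"
  define a where "a = quad b u1"
  define s where "s = b u1 u2"
  have \<alpha>0: "\<alpha> \<noteq> 0" using u1 unfolding \<alpha>_def by simp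
  have \<alpha>a: "\<alpha>^2 = to_ac a" unfolding \<alpha>_def a_def by (rule qsq)
  have a0: "a \<noteq> 0" using u1 qz unfolding a_def by simp
  have s\<alpha>: "to_ac s = \<alpha> * q u2" unfolding s_def \<alpha>_def using h6 u1 u2 by blast
  have s0: "s \<noteq> 0"
  proof
    assume "s = 0"
    then have "\<alpha> * q u2 = 0" using s\<alpha> by simp
    with \<alpha>0 u2(2) show False by simp
  qed

  define P where "P = {x. q x * \<alpha> \<in> range to_ac}"
  define f where "f = (\<lambda>x. of_ac (q x * \<alpha>))"
  have fP: "to_ac (f x) = q x * \<alpha>" if "x \<in> P" for x
    using that unfolding P_def f_def by (simp add: to_ac_of_ac)
  have q0: "q 0 = 0" using qz sb_zero1[OF sb] unfolding quad_def by simp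
  have inP: "\<And>x c. q x * \<alpha> = to_ac c \<Longrightarrow> x \<in> P" unfolding P_def by auto
  have P_sub: "vec.subspace P"
  proof (rule vec.subspaceI)
    show "0 \<in> P" using q0 inP[of 0 0] by simp
  next
    fix x y assume xy: "x \<in> P" "y \<in> P"
    have "q (x + y) * \<alpha> = q x * \<alpha> + q y * \<alpha>" by (simp only: qadd distrib_right)
    also have "\<dots> = to_ac (f x) + to_ac (f y)" using fP[OF xy(1)] fP[OF xy(2)] by simp
    also have "\<dots> = to_ac (f x + f y)" by simp
    finally show "x + y \<in> P" by (rule inP)
  next
    fix c x assume x: "x \<in> P"
    have "q (c *s x) * \<alpha> = to_ac c * (q x * \<alpha>)" by (simp only: qsm mult.assoc)
    also have "\<dots> = to_ac (c * f x)" using fP[OF x] by simp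
    finally show "c *s x \<in> P" by (rule inP)
  qed
  have f_lin: "linon P f" unfolding linon_def
  proof (intro conjI ballI allI)
    fix x y assume xy: "x \<in> P" "y \<in> P"
    then have "x + y \<in> P" using P_sub vec.subspace_add by blast
    have "to_ac (f (x + y)) = q x * \<alpha> + q y * \<alpha>" using fP[OF \<open>x + y \<in> P\<close>] by (simp only: qadd distrib_right)
    also have "\<dots> = to_ac (f x + f y)" using fP[OF xy(1)] fP[OF xy(2)] by simp
    finally have "to_ac (f (x + y)) = to_ac (f x + f y)" .
    then show "f (x + y) = f x + f y" by (simp only: to_ac_eq_iff)
  next
    fix c x assume x: "x \<in> P"
    then have "c *s x \<in> P" using P_sub vec.subspace_scale by blast
    have "to_ac (f (c *s x)) = to_ac c * (q x * \<alpha>)" using fP[OF \<open>c *s x \<in> P\<close>] by (simp only: qsm mult.assoc)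
    also have "\<dots> = to_ac (c * f x)" using fP[OF x] by simp
    finally have "to_ac (f (c *s x)) = to_ac (c * f x)" .
    then show "f (c *s x) = c * f x" by (simp only: to_ac_eq_iff)
  qed
  have qf0: "q x = 0" if "x \<in> P" "f x = 0" for x
    using fP[OF that(1)] that(2) \<alpha>0 by simp
  have fK: "x \<in> kerQ b" if "x \<in> P" "f x = 0" for x
    using qf0[OF that] qz unfolding kerQ_def by simp

  define A where "A = (\<lambda>x y. b x y + f x * f y / a)"
  have A_at: "to_ac (A x y) = a_transform b x y" if "x \<in> P" "y \<in> P" for x y
  proof -
    have "to_ac (A x y) = to_ac (b x y) + (q x * \<alpha>) * (q y * \<alpha>) / \<alpha>^2"
      unfolding A_def using fP that \<alpha>a by simp
    also have "\<dots> = to_ac (b x y) + q x * q y" using \<alpha>0 by (simp add: power2_eq_square)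
    finally show ?thesis using ate by simp
  qed
  have fl: "\<And>x y. x \<in> P \<Longrightarrow> y \<in> P \<Longrightarrow> f (x + y) = f x + f y"
    and fs: "\<And>c x. x \<in> P \<Longrightarrow> f (c *s x) = c * f x" using f_lin unfolding linon_def by blast+
  have A_bil: "bilon P A" unfolding bilon_def linon_def
  proof (intro conjI ballI allI)
    fix x y z assume "x \<in> P" "y \<in> P" "z \<in> P"
    then show "A x (y + z) = A x y + A x z" "A (y + z) x = A y x + A z x"
      unfolding A_def using fl by (simp_all add: sb_add1[OF sb] sb_add2[OF sb] algebra_simps add_divide_distrib)
  next
    fix x y c assume "x \<in> P" "y \<in> P"
    then show "A x (c *s y) = c * A x y" "A (c *s y) x = c * A y x"
      unfolding A_def using fs by (simp_all add: sb_smult1[OF sb] sb_smult2[OF sb] algebra_simps)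
  next
    fix x y assume "x \<in> P" "y \<in> P"
    then show "A x y = A y x" unfolding A_def using bsym by (simp add: mult.commute)
  qed
  have A_xx: "A x x = 0" if "x \<in> P" for x
  proof -
    have "to_ac (A x x) = to_ac (b x x) + (q x)^2" using A_at[OF that that] ate by (simp add: power2_eq_square)
    also have "\<dots> = 2 * to_ac (b x x)" using qsq unfolding quad_def by simp
    also have "\<dots> = 0" using two_ac[OF h] by simp
    finally show ?thesis by simp
  qed
  have V2P: "V2 \<subseteq> P"
  proof
    fix v assume v: "v \<in> V2"
    have "q v * \<alpha> = to_ac (b u1 v)" using h6[OF u1(1) v] unfolding \<alpha>_def by (simp add: mult.commute)
    then show "v \<in> P" by (rule inP)
  qed
  have V1P: "V1 \<subseteq> P"
  proof
    fix v assume v: "v \<in> V1"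
    have e: "to_ac (b v u2) = q v * q u2" using h6[OF v u2(1)] .
    have "q v * \<alpha> = to_ac (b v u2 * a / s)"
    proof -
      have "to_ac (b v u2 * a / s) = (q v * q u2) * \<alpha>^2 / (\<alpha> * q u2)"
        using e \<alpha>a s\<alpha> by simp
      also have "\<dots> = q v * \<alpha>" using \<alpha>0 u2(2) by (simp add: power2_eq_square field_simps)
      finally show ?thesis by simp
    qed
    then show "v \<in> P" by (rule inP)
  qed
  have V12A: "A v1 v2 = 0" if "v1 \<in> V1" "v2 \<in> V2" for v1 v2
    using A_at[of v1 v2] that V1P V2P hyp by auto

  have l1: "\<forall>x\<in>P. linon P (A x)" using A_bil unfolding bilon_def by blast
  define R where "R = {y\<in>P. \<forall>x\<in>P. A x y = 0}"
  have R_sub: "vec.subspace R" unfolding R_def using perp_subspace[OF P_sub, of P A] l1 by blast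
  have RP: "R \<subseteq> P" unfolding R_def by blast

  have i1: "vec.dim {x\<in>P. \<forall>y\<in>V1. A y x = 0} + vec.dim V1 = vec.dim P + vec.dim {y\<in>V1. \<forall>x\<in>P. A x y = 0}"
    by (rule dimf[OF P_sub V1 V1P A_bil])
  have "V2 \<subseteq> {x\<in>P. \<forall>y\<in>V1. A y x = 0}" using V2P V12A by blast
  then have i2: "vec.dim V2 \<le> vec.dim {x\<in>P. \<forall>y\<in>V1. A y x = 0}" by (rule vec.dim_subset)
  have "{y\<in>V1. \<forall>x\<in>P. A x y = 0} \<subseteq> R" using V1P unfolding R_def by blast
  then have i3: "vec.dim {y\<in>V1. \<forall>x\<in>P. A x y = 0} \<le> vec.dim R" by (rule vec.dim_subset)

  have fR: "\<forall>g\<in>{f}. linon R g" using linon_mono[OF f_lin RP] by blast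
  have ii1: "vec.dim R \<le> vec.dim {x\<in>R. \<forall>g\<in>{f}. g x = 0} + card {f}"
    using lower[OF R_sub _ fR] by blast
  have "{x\<in>R. \<forall>g\<in>{f}. g x = 0} \<subseteq> {x\<in>UNIV. \<forall>y\<in>P. b y x = 0}"
  proof
    fix x assume x: "x \<in> {x\<in>R. \<forall>g\<in>{f}. g x = 0}"
    have "b y x = 0" if y: "y \<in> P" for y
    proof -
      have "A y x = 0" using x y unfolding R_def by blast
      moreover have "f x = 0" using x by blast
      ultimately show ?thesis unfolding A_def by simp
    qed
    then show "x \<in> {x\<in>UNIV. \<forall>y\<in>P. b y x = 0}" by blast
  qed
  then have ii2: "vec.dim {x\<in>R. \<forall>g\<in>{f}. g x = 0} \<le> vec.dim {x\<in>UNIV. \<forall>y\<in>P. b y x = 0}"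
    by (rule vec.dim_subset)
  have ii3: "vec.dim {x\<in>UNIV. \<forall>y\<in>P. b y x = 0} + vec.dim P = CARD('n)"
    by (rule orth_full[OF sb nd P_sub])
  have sum: "vec.dim V1 + vec.dim V2 = CARD('n) + 1"
    and mr: "vec.dim P + vec.dim R = CARD('n) + 1"
    using i1 i2 i3 ii1 ii2 ii3 dimh by auto

  define Iso where "Iso = {L. vec.subspace L \<and> L \<subseteq> P \<and> (\<forall>x\<in>L. \<forall>y\<in>L. A x y = 0)}"
  have dimle: "\<And>S::('a^'n) set. vec.dim S \<le> CARD('n)"
    using vec.dim_subset[OF subset_UNIV] vec_dim_card by metis
  have finD: "finite (vec.dim ` Iso)"
    by (rule finite_subset[of _ "{..CARD('n)}"]) (use dimle in auto)
  have "{0} \<in> Iso" unfolding Iso_def using A_xx vec.subspace_0[OF P_sub] by auto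
  then have neD: "vec.dim ` Iso \<noteq> {}" by blast
  obtain L where L: "L \<in> Iso" "vec.dim L = Max (vec.dim ` Iso)"
    using Max_in[OF finD neD] by auto
  have Lmax: "vec.dim L' \<le> vec.dim L" if "L' \<in> Iso" for L'
    using Max_ge[OF finD] that L(2) by simp
  have Ls: "vec.subspace L" and LP: "L \<subseteq> P" and Liso: "\<forall>x\<in>L. \<forall>y\<in>L. A x y = 0"
    using L(1) unfolding Iso_def by auto
  have perpL: "{x\<in>P. \<forall>y\<in>L. A y x = 0} \<subseteq> L"
  proof
    fix x assume x: "x \<in> {x\<in>P. \<forall>y\<in>L. A y x = 0}"
    show "x \<in> L"
    proof (rule ccontr)
      assume xn: "x \<notin> L"
      let ?L' = "vec.span (insert x L)"
      have "insert x L \<subseteq> P" using x LP by blast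
      then have "?L' \<subseteq> P" using vec.span_minimal P_sub by blast
      moreover have "\<forall>u\<in>?L'. \<forall>v\<in>?L'. A u v = 0"
        using iso_extend[OF P_sub A_bil Ls LP Liso, of x] x A_xx by blast
      ultimately have "?L' \<in> Iso" unfolding Iso_def by blast
      then have "vec.dim ?L' \<le> vec.dim L" by (rule Lmax)
      moreover have "x \<notin> vec.span L" using xn Ls by (metis vec.span_eq_iff)
      then have "vec.dim ?L' = vec.dim L + 1" by (simp add: vec.dim_insert)
      ultimately show False by simp
    qed
  qed
  have RL: "R \<subseteq> L" using perpL LP unfolding R_def by blast
  have iii1: "vec.dim {x\<in>P. \<forall>y\<in>L. A y x = 0} + vec.dim L = vec.dim P + vec.dim {y\<in>L. \<forall>x\<in>P. A x y = 0}"
    by (rule dimf[OF P_sub Ls LP A_bil])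
  have e1: "{x\<in>P. \<forall>y\<in>L. A y x = 0} = L" using perpL LP Liso by blast
  have e2: "{y\<in>L. \<forall>x\<in>P. A x y = 0} = R" using RL LP unfolding R_def by blast
  have twoL: "vec.dim L + vec.dim L = CARD('n) + 1" using iii1 mr unfolding e1 e2 by simp
  have oddn: "odd (CARD('n))" using twoL by presburger

  define L0 where "L0 = {x\<in>L. \<forall>g\<in>{f}. g x = 0}"
  have fL: "\<forall>g\<in>{f}. linon L g" using linon_mono[OF f_lin LP] by blast
  have L0s: "vec.subspace L0" and L0d: "vec.dim L \<le> vec.dim L0 + card {f}"
    using lower[OF Ls _ fL] unfolding L0_def by blast+
  have L0iso: "\<forall>x\<in>L0. \<forall>y\<in>L0. b x y = 0"
  proof (intro ballI)
    fix x y assume "x \<in> L0" "y \<in> L0"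
    then have "A x y = 0" "f x = 0" using Liso unfolding L0_def by blast+
    then show "b x y = 0" unfolding A_def by simp
  qed
  have wub: "2 * vec.dim W \<le> CARD('n)" if W: "vec.subspace W" "\<forall>x\<in>W. \<forall>y\<in>W. b x y = 0" for W
  proof -
    have "W \<subseteq> {x\<in>UNIV. \<forall>y\<in>W. b y x = 0}" using W(2) by blast
    then have "vec.dim W \<le> vec.dim {x\<in>UNIV. \<forall>y\<in>W. b y x = 0}" by (rule vec.dim_subset)
    then show ?thesis using orth_full[OF sb nd W(1)] by linarith
  qed
  have witt: "witt_index b = (CARD('n) - 1) div 2"
    unfolding witt_index_def
  proof (rule Max_eqI)
    show "finite {vec.dim W |W. vec.subspace W \<and> (\<forall>x\<in>W. \<forall>y\<in>W. b x y = 0)}"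
      by (rule finite_subset[of _ "{..CARD('n)}"]) (use dimle in auto)
  next
    fix y assume "y \<in> {vec.dim W |W. vec.subspace W \<and> (\<forall>x\<in>W. \<forall>y\<in>W. b x y = 0)}"
    then obtain W where "y = vec.dim W" "vec.subspace W" "\<forall>x\<in>W. \<forall>y\<in>W. b x y = 0" by blast
    then have "2 * y \<le> CARD('n)" using wub by blast
    then show "y \<le> (CARD('n) - 1) div 2" using oddn by presburger
  next
    have "2 * vec.dim L0 \<le> CARD('n)" using wub[OF L0s L0iso] .
    then have "vec.dim L0 = (CARD('n) - 1) div 2" using L0d twoL oddn by simp presburger
    then show "(CARD('n) - 1) div 2 \<in> {vec.dim W |W. vec.subspace W \<and> (\<forall>x\<in>W. \<forall>y\<in>W. b x y = 0)}"
      using L0s L0iso unfolding mem_Collect_eq by (intro exI[of _ L0]) simp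
  qed

  have bl: "\<forall>y\<in>UNIV. linon UNIV (b y)" using sb_bilon[OF sb, of UNIV] unfolding bilon_def by blast
  define W2 where "W2 = {x\<in>V2. \<forall>g\<in>{f}. g x = 0}"
  have fV2: "\<forall>g\<in>{f}. linon V2 g" using linon_mono[OF f_lin V2P] by blast
  have W2s: "vec.subspace W2" and W2d: "vec.dim V2 \<le> vec.dim W2 + card {f}"
    using lower[OF V2 _ fV2] unfolding W2_def by blast+
  have W2K: "W2 \<subseteq> kerQ b" using fK V2P unfolding W2_def by blast
  have V1O: "V1 \<subseteq> {x\<in>UNIV. \<forall>y\<in>W2. b y x = 0}"
  proof (intro subsetI CollectI conjI ballI UNIV_I)
    fix x y assume x: "x \<in> V1" and y: "y \<in> W2"
    have "q y = 0" using qf0 y V2P unfolding W2_def by blast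
    then have "to_ac (b x y) = 0" using h6[OF x] y unfolding W2_def by simp
    then show "b y x = 0" using bsym by simp
  qed
  have O2s: "vec.subspace {x\<in>UNIV. \<forall>y\<in>W2. b y x = 0}"
    using perp_subspace[OF vec.subspace_UNIV, of W2 b] bl by blast
  have V1eq: "V1 = {x\<in>UNIV. \<forall>y\<in>W2. b y x = 0}"
    using vec.subspace_dim_equal[OF V1 O2s V1O] orth_full[OF sb nd W2s] W2d sum by simp
  have c1: "orth_compl b (kerQ b) \<subseteq> V1"
    unfolding V1eq orth_compl_def using W2K by blast

  define W1 where "W1 = {x\<in>V1. \<forall>g\<in>{f}. g x = 0}"
  have fV1: "\<forall>g\<in>{f}. linon V1 g" using linon_mono[OF f_lin V1P] by blast
  have W1s: "vec.subspace W1" and W1d: "vec.dim V1 \<le> vec.dim W1 + card {f}"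
    using lower[OF V1 _ fV1] unfolding W1_def by blast+
  have W1K: "W1 \<subseteq> kerQ b" using fK V1P unfolding W1_def by blast
  have V2O: "V2 \<subseteq> {x\<in>UNIV. \<forall>y\<in>W1. b y x = 0}"
  proof (intro subsetI CollectI conjI ballI UNIV_I)
    fix x y assume x: "x \<in> V2" and y: "y \<in> W1"
    have "q y = 0" using qf0 y V1P unfolding W1_def by blast
    then have "to_ac (b y x) = 0" using h6[OF _ x] y unfolding W1_def by simp
    then show "b y x = 0" by simp
  qed
  have O1s: "vec.subspace {x\<in>UNIV. \<forall>y\<in>W1. b y x = 0}"
    using perp_subspace[OF vec.subspace_UNIV, of W1 b] bl by blast
  have V2eq: "V2 = {x\<in>UNIV. \<forall>y\<in>W1. b y x = 0}"
    using vec.subspace_dim_equal[OF V2 O1s V2O] orth_full[OF sb nd W1s] W1d sum by simp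
  have c2: "orth_compl b (kerQ b) \<subseteq> V2"
    unfolding V2eq orth_compl_def using W1K by blast

  show ?thesis using oddn witt c1 c2 sum by blast
qed

end
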